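(* Let $\mathcal{D}$ be a symmetric $2$-$(56,11,2)$ design (biplane) with point set $\{1,\dots,56\}$ and let $B=\{46,\dots,56\}$ be a block of $\mathcal{D}$. Let $A$ be the $56\times 56$ points-by-blocks incidence matrix of $\mathcal{D}$ with columns ordered so that the last column corresponds to $B$, so that $$A=\begin{pmatrix} A'' & \bar 0_{45}\\ A' & \bar 1_{11}\end{pmatrix},$$ where $A''$ is the $45\times 55$ incidence matrix of the residual design $\mathcal{D}_B$ (a $2$-$(45,9,2)$ design on points $1,\dots,45$) and $A'$ is the $11\times 55$ incidence matrix of the derived design $\mathcal{D}^B$. Let $L''$ and $L$ be the linear codes over $GF(3)$ spanned by the rows of $A''$ and of $A$ respectively. If $c=(c_1,\dots,c_{55})\in\{0,1\}^{55}$ has Hamming weight $12$ and lies in $(L'')^\perp$, then $c^*=(c_1,\dots,c_{55},0)$ lies in $L^\perp$.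
   Context: A symmetric $2$-$(v,k,\lambda)$ design has $v$ points and $v$ blocks of size $k$, every pair of points in exactly $\lambda$ blocks; a biplane is one with $\lambda=2$. For a block $B$ of a design $(X,\mathcal{B})$, the residual design $\mathcal{D}_B$ has point set $X\setminus B$ and blocks $B_j\setminus B$ for $B_j\in\mathcal{B}$, $B_j\neq B$; the derived design $\mathcal{D}^B$ has point set $B$ and blocks $B\cap B_j$ for $B_j\neq B$. Duals of codes are taken with respect to the standard inner product over $GF(3)$. *)

theory Defs
  imports Main
begin

definition sym_design :: "nat \<Rightarrow> nat \<Rightarrow> nat \<Rightarrow> (nat \<Rightarrow> nat set) \<Rightarrow> bool" where
  "sym_design v k lam Bl \<longleftrightarrow>
     (\<forall>j\<in>{1..v}. Bl j \<subseteq> {1..v} \<and> card (Bl j) = k) \<and>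
     (\<forall>x\<in>{1..v}. \<forall>y\<in>{1..v}. x \<noteq> y \<longrightarrow>
        card {j\<in>{1..v}. x \<in> Bl j \<and> y \<in> Bl j} = lam)"

definition inc :: "(nat \<Rightarrow> nat set) \<Rightarrow> nat \<Rightarrow> nat \<Rightarrow> int" where
  "inc Bl i j = (if i \<in> Bl j then 1 else 0)"

text \<open>GF(3) code of length n spanned by the rows M i (i in R); vectors are functions
  nat => int on coordinates {1..n}, GF(3) elements represented by 0,1,2, zero outside {1..n}.\<close>
definition gf3_span :: "nat \<Rightarrow> nat set \<Rightarrow> (nat \<Rightarrow> nat \<Rightarrow> int) \<Rightarrow> (nat \<Rightarrow> int) set" where
  "gf3_span n R M = {v. \<exists>a :: nat \<Rightarrow> int.
      \<forall>j. v j = (if j \<in> {1..n} then (\<Sum>i\<in>R. a i * M i j) mod 3 else 0)}"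

definition gf3_dual :: "nat \<Rightarrow> (nat \<Rightarrow> int) set \<Rightarrow> (nat \<Rightarrow> int) set" where
  "gf3_dual n L = {c. \<forall>v\<in>L. (\<Sum>j=1..n. c j * v j) mod 3 = 0}"

end

theory Submission
  imports Defs
begin

lemma inc_sq: "inc Bl x j * inc Bl x j = inc Bl x j"
  by (simp add: inc_def)

lemma sum_ind: "finite A \<Longrightarrow> (\<Sum>x\<in>A. if P x then (1::int) else 0) = int (card {x\<in>A. P x})"
  by (simp add: sum.If_cases Int_def conj_commute)

lemma col_sum:
  assumes d: "sym_design 56 11 2 Bl" and j: "j \<in> {1..56}"
  shows "(\<Sum>x\<in>{1..56}. inc Bl x j) = 11"
proof -
  have s: "Bl j \<subseteq> {1..56}" "card (Bl j) = 11" using d j by (auto simp: sym_design_def)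
  have "{x\<in>{1..56}. x \<in> Bl j} = Bl j" using s by auto
  then show ?thesis unfolding inc_def by (simp add: sum_ind s)
qed

lemma pair_sum:
  assumes d: "sym_design 56 11 2 Bl" and xy: "x \<in> {1..56}" "y \<in> {1..56}" "x \<noteq> y"
  shows "(\<Sum>j\<in>{1..56}. inc Bl x j * inc Bl y j) = 2"
proof -
  have c: "card {j\<in>{1..56}. x \<in> Bl j \<and> y \<in> Bl j} = 2" using d xy by (auto simp: sym_design_def)
  have "(\<Sum>j\<in>{1..56}. inc Bl x j * inc Bl y j) = (\<Sum>j\<in>{1..56::nat}. if x \<in> Bl j \<and> y \<in> Bl j then 1 else 0)"
    by (rule sum.cong) (auto simp: inc_def)
  also have "\<dots> = 2" by (subst sum_ind) (simp, use c in simp)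
  finally show ?thesis .
qed

lemma rep_sum:
  assumes d: "sym_design 56 11 2 Bl" and x: "x \<in> {1..56}"
  shows "(\<Sum>j\<in>{1..56}. inc Bl x j) = 11"
proof -
  have "(\<Sum>y\<in>{1..56}-{x}. \<Sum>j\<in>{1..56}. inc Bl x j * inc Bl y j) = (\<Sum>y\<in>{1..56::nat}-{x}. 2)"
    by (rule sum.cong) (use pair_sum[OF d] x in auto)
  also have "\<dots> = 110" using x by simp
  finally have a: "(\<Sum>y\<in>{1..56}-{x}. \<Sum>j\<in>{1..56}. inc Bl x j * inc Bl y j) = 110" .
  have "(\<Sum>y\<in>{1..56}-{x}. \<Sum>j\<in>{1..56}. inc Bl x j * inc Bl y j)
      = (\<Sum>j\<in>{1..56}. inc Bl x j * (\<Sum>y\<in>{1..56}-{x}. inc Bl y j))"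
    by (subst sum.swap) (simp add: sum_distrib_left)
  also have "\<dots> = (\<Sum>j\<in>{1..56}. inc Bl x j * (11 - inc Bl x j))"
  proof (rule sum.cong)
    fix j assume j: "j \<in> {1..56::nat}"
    have "(\<Sum>y\<in>{1..56}-{x}. inc Bl y j) = (\<Sum>y\<in>{1..56}. inc Bl y j) - inc Bl x j"
      using x by (simp add: sum_diff1)
    then show "inc Bl x j * (\<Sum>y\<in>{1..56}-{x}. inc Bl y j) = inc Bl x j * (11 - inc Bl x j)"
      using col_sum[OF d j] by simp
  qed simp
  also have "\<dots> = (\<Sum>j\<in>{1..56}. 10 * inc Bl x j)"
    by (rule sum.cong) (auto simp: inc_def)
  also have "\<dots> = 10 * (\<Sum>j\<in>{1..56}. inc Bl x j)" by (simp add: sum_distrib_left)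
  finally show ?thesis using a by simp
qed

lemma inter_sum:
  assumes d: "sym_design 56 11 2 Bl" and j0: "j0 \<in> {1..56}" and j: "j \<in> {1..56}" "j \<noteq> j0"
  shows "(\<Sum>x\<in>{1..56}. inc Bl x j0 * inc Bl x j) = 2"
proof -
  define P :: "nat set" where "P = {1..56}"
  define m where "m = (\<lambda>j. \<Sum>x\<in>P. inc Bl x j0 * inc Bl x j)"
  have fP: "finite P" by (simp add: P_def)
  have S1: "(\<Sum>j\<in>P. m j) = 121"
  proof -
    have "(\<Sum>j\<in>P. m j) = (\<Sum>x\<in>P. inc Bl x j0 * (\<Sum>j\<in>P. inc Bl x j))"
      unfolding m_def by (subst sum.swap) (simp add: sum_distrib_left)
    also have "\<dots> = (\<Sum>x\<in>P. inc Bl x j0 * 11)"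
      by (rule sum.cong) (use rep_sum[OF d] in \<open>simp_all add: P_def\<close>)
    also have "\<dots> = 121" using col_sum[OF d j0] by (simp add: sum_distrib_right[symmetric] P_def)
    finally show ?thesis .
  qed
  have g: "(\<Sum>j\<in>P. inc Bl x j * inc Bl y j) = 2 + (if x = y then 9 else 0)"
    if "x \<in> P" "y \<in> P" for x y
    using that pair_sum[OF d, of x y] rep_sum[OF d, of x] by (auto simp: P_def inc_sq)
  have S2: "(\<Sum>j\<in>P. m j * m j) = 341"
  proof -
    have "(\<Sum>j\<in>P. m j * m j) = (\<Sum>j\<in>P. \<Sum>x\<in>P. \<Sum>y\<in>P. (inc Bl x j0 * inc Bl y j0) * (inc Bl x j * inc Bl y j))"
      unfolding m_def by (simp add: sum_product mult_ac)
    also have "\<dots> = (\<Sum>x\<in>P. \<Sum>y\<in>P. \<Sum>j\<in>P. (inc Bl x j0 * inc Bl y j0) * (inc Bl x j * inc Bl y j))"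
      by (subst sum.swap, rule sum.cong[OF refl], rule sum.swap)
    also have "\<dots> = (\<Sum>x\<in>P. \<Sum>y\<in>P. (inc Bl x j0 * inc Bl y j0) * (2 + (if x = y then 9 else 0)))"
      by (intro sum.cong refl) (simp add: sum_distrib_left[symmetric] g)
    also have "\<dots> = (\<Sum>x\<in>P. \<Sum>y\<in>P. 2 * (inc Bl x j0 * inc Bl y j0)) + (\<Sum>x\<in>P. \<Sum>y\<in>P. (if x = y then 9 * (inc Bl x j0 * inc Bl y j0) else 0))"
      by (simp add: sum.distrib[symmetric] algebra_simps if_distrib cong: if_cong)
    also have "(\<Sum>x\<in>P. \<Sum>y\<in>P. (if x = y then 9 * (inc Bl x j0 * inc Bl y j0) else 0)) = (\<Sum>x\<in>P. 9 * inc Bl x j0)"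
      by (rule sum.cong) (simp_all add: fP inc_sq)
    also have "(\<Sum>x\<in>P. \<Sum>y\<in>P. 2 * (inc Bl x j0 * inc Bl y j0)) = 2 * ((\<Sum>x\<in>P. inc Bl x j0) * (\<Sum>y\<in>P. inc Bl y j0))"
      by (subst sum_product) (simp only: sum_distrib_left)
    finally show ?thesis using col_sum[OF d j0] by (simp add: P_def sum_distrib_left[symmetric])
  qed
  have mj0: "m j0 = 11" unfolding m_def using col_sum[OF d j0] by (simp add: inc_sq P_def)
  have j0P: "j0 \<in> P" using j0 by (simp add: P_def)
  have T1: "(\<Sum>j\<in>P-{j0}. m j) = 110" using S1 mj0 by (simp add: sum_diff1 fP j0P)
  have T2: "(\<Sum>j\<in>P-{j0}. m j * m j) = 220" using S2 mj0 by (simp add: sum_diff1 fP j0P)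
  have cP: "card (P - {j0}) = 55" using j0P by (simp add: P_def)
  have "(\<Sum>j\<in>P-{j0}. (m j - 2) * (m j - 2)) = (\<Sum>j\<in>P-{j0}. m j * m j) - 4 * (\<Sum>j\<in>P-{j0}. m j) + 4 * int (card (P - {j0}))"
    by (simp add: algebra_simps sum_subtractf sum.distrib sum_distrib_left)
  also have "\<dots> = 0" using T1 T2 cP by simp
  finally have z: "(\<Sum>j\<in>P-{j0}. (m j - 2) * (m j - 2)) = 0" .
  have "\<forall>j\<in>P-{j0}. (m j - 2) * (m j - 2) = 0"
    using z by (subst sum_nonneg_eq_0_iff[symmetric]) (simp_all add: fP)
  then have "m j = 2" using j by (auto simp: P_def)
  then show ?thesis by (simp add: m_def P_def)
qed

theorem lemma2:
  fixes Bl :: "nat \<Rightarrow> nat set" and c :: "nat \<Rightarrow> int"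
  assumes design: "sym_design 56 11 2 Bl"
    and lastB: "Bl 56 = {46..56}"
    and c01: "\<forall>j\<in>{1..55}. c j \<in> {0, 1}"
    and wt: "card {j\<in>{1..55}. c j \<noteq> 0} = 12"
    and cdual: "c \<in> gf3_dual 55 (gf3_span 55 {1..45} (inc Bl))"
  shows "(\<lambda>j. if j = 56 then 0 else c j) \<in> gf3_dual 56 (gf3_span 56 {1..56} (inc Bl))"
proof -
  define u where "u = (\<lambda>x. \<Sum>j\<in>{1..55}. c j * inc Bl x j)"
  have A: "3 dvd u x" if x: "x \<in> {1..45}" for x
  proof -
    define a :: "nat \<Rightarrow> int" where "a = (\<lambda>i. if i = x then 1 else 0)"
    define v where "v = (\<lambda>j. if j \<in> {1..55} then (\<Sum>i\<in>{1..45}. a i * inc Bl i j) mod 3 else 0)"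
    have "v \<in> gf3_span 55 {1..45} (inc Bl)" unfolding gf3_span_def v_def by blast
    then have "(\<Sum>j=1..55. c j * v j) mod 3 = 0" using cdual by (auto simp: gf3_dual_def)
    moreover have "v j = inc Bl x j" if "j \<in> {1..55}" for j
    proof -
      have "(\<Sum>i\<in>{1..45}. a i * inc Bl i j) = (\<Sum>i\<in>{1..45::nat}. if i = x then inc Bl x j else 0)"
        by (rule sum.cong) (auto simp: a_def)
      also have "\<dots> = inc Bl x j" using x by simp
      finally show ?thesis using that by (simp add: v_def inc_def)
    qed
    ultimately have "(\<Sum>j=1..55. c j * inc Bl x j) mod 3 = 0"
      by (metis (no_types, lifting) sum.cong)
    then show ?thesis by (simp add: u_def mod_eq_0_iff_dvd)
  qed
  have C: "(\<Sum>j\<in>{1..55}. c j) = 12"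
  proof -
    have "(\<Sum>j\<in>{1..55}. c j) = (\<Sum>j\<in>{1..55::nat}. if c j \<noteq> 0 then 1 else 0)"
      by (rule sum.cong) (use c01 in auto)
    also have "\<dots> = 12" by (subst sum_ind) (simp, use wt in simp)
    finally show ?thesis .
  qed
  have Cj: "3 dvd (\<Sum>x\<in>{1..56}. inc Bl x j * u x)" if j: "j \<in> {1..55}" for j
  proof -
    have jP: "j \<in> {1..56}" using j by simp
    have "(\<Sum>x\<in>{1..56}. inc Bl x j * u x) = (\<Sum>k\<in>{1..55}. c k * (\<Sum>x\<in>{1..56}. inc Bl x j * inc Bl x k))"
      unfolding u_def by (simp add: sum_distrib_left sum_distrib_right mult_ac, rule sum.swap)
    also have "\<dots> = (\<Sum>k\<in>{1..55}. c k * (2 + (if k = j then 9 else 0)))"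
    proof (rule sum.cong)
      fix k assume k: "k \<in> {1..55::nat}"
      show "c k * (\<Sum>x\<in>{1..56}. inc Bl x j * inc Bl x k) = c k * (2 + (if k = j then 9 else 0))"
      proof (cases "k = j")
        case True then show ?thesis using col_sum[OF design jP] by (simp add: inc_sq)
      next
        case False then show ?thesis using inter_sum[OF design jP, of k] k by simp
      qed
    qed simp
    also have "\<dots> = 2 * (\<Sum>k\<in>{1..55}. c k) + 9 * c j"
    proof -
      have "(\<Sum>k\<in>{1..55}. c k * (2 + (if k = j then 9 else 0))) = (\<Sum>k\<in>{1..55}. 2 * c k + (if k = j then 9 * c j else 0))"
        by (rule sum.cong) auto
      also have "\<dots> = 2 * (\<Sum>k\<in>{1..55}. c k) + 9 * c j"
        using j by (simp add: sum.distrib sum_distrib_left)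
      finally show ?thesis .
    qed
    finally show ?thesis using C by simp
  qed
  have D: "3 dvd (u p + u q)" if p: "p \<in> {46..56}" and q: "q \<in> {46..56}" and pq: "p \<noteq> q" for p q
  proof -
    have pP: "p \<in> {1..56}" "q \<in> {1..56}" using p q by auto
    let ?J = "{j\<in>{1..56}. p \<in> Bl j \<and> q \<in> Bl j}"
    have cJ: "card ?J = 2" using design pP pq by (auto simp: sym_design_def)
    have 56: "56 \<in> ?J" using lastB p q by auto
    have "card (?J - {56}) = 1" using cJ 56 by (simp add: card_Diff_singleton)
    then obtain j0 where j0: "j0 \<in> ?J - {56}" by (metis card_1_singletonE insertI1)
    have j0P: "j0 \<in> {1..56}" "j0 \<noteq> 56" using j0 by auto
    have "(\<Sum>x\<in>{1..56}. inc Bl x j0 * inc Bl x 56) = 2" using inter_sum[OF design, of j0 56] j0P by simp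
    moreover have "(\<Sum>x\<in>{1..56}. inc Bl x j0 * inc Bl x 56) = (\<Sum>x\<in>{1..56::nat}. if x \<in> Bl j0 \<inter> {46..56} then 1 else 0)"
      by (rule sum.cong) (auto simp: inc_def lastB)
    ultimately have e1: "(\<Sum>x\<in>{1..56::nat}. if x \<in> Bl j0 \<inter> {46..56} then 1 else 0) = (2::int)" by simp
    have seteq: "{x\<in>{1..56}. x \<in> Bl j0 \<inter> {46..56}} = Bl j0 \<inter> {46..56}" by auto
    have "int (card {x\<in>{1..56::nat}. x \<in> Bl j0 \<inter> {46..56}}) = 2"
      using e1 sum_ind[of "{1..56::nat}" "\<lambda>x. x \<in> Bl j0 \<inter> {46..56}"] by simp
    then have "int (card (Bl j0 \<inter> {46..56})) = 2" unfolding seteq .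
    then have cI: "card (Bl j0 \<inter> {46..56}) = 2" by simp
    have sub: "{p, q} \<subseteq> Bl j0 \<inter> {46..56}" using j0 p q by auto
    have I: "Bl j0 \<inter> {46..56} = {p, q}"
      using card_subset_eq[OF _ sub] cI pq by simp
    have split: "{1..56::nat} = {1..45} \<union> {46..56}" by auto
    have s1: "(\<Sum>x\<in>{1..56}. inc Bl x j0 * u x) = (\<Sum>x\<in>{1..45}. inc Bl x j0 * u x) + (\<Sum>x\<in>{46..56}. inc Bl x j0 * u x)"
      by (subst split, rule sum.union_disjoint) auto
    have s2: "(\<Sum>x\<in>{46..56}. inc Bl x j0 * u x) = (\<Sum>x\<in>{p,q}. u x)"
    proof -
      have "(\<Sum>x\<in>{46..56}. inc Bl x j0 * u x) = (\<Sum>x\<in>{46..56::nat}. if x \<in> Bl j0 then u x else 0)"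
        by (rule sum.cong) (auto simp: inc_def)
      also have "\<dots> = (\<Sum>x\<in>{x\<in>{46..56}. x \<in> Bl j0}. u x)" by (rule sum.inter_filter[symmetric]) simp
      also have "{x\<in>{46..56}. x \<in> Bl j0} = {p, q}" using I by blast
      finally show ?thesis .
    qed
    have s3: "3 dvd (\<Sum>x\<in>{1..45}. inc Bl x j0 * u x)" by (rule dvd_sum) (simp add: A)
    have s4: "3 dvd (\<Sum>x\<in>{1..56}. inc Bl x j0 * u x)"
    proof (cases "j0 \<le> 55")
      case True then show ?thesis using Cj j0P by simp
    next
      case False then show ?thesis using j0P by simp
    qed
    have "(\<Sum>x\<in>{p,q}. u x) = u p + u q" using pq by simp
    then have "3 dvd ((\<Sum>x\<in>{1..45}. inc Bl x j0 * u x) + (u p + u q))" using s1 s2 s4 by simp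
    then show ?thesis using s3 by (simp add: dvd_add_right_iff)
  qed
  have E: "3 dvd u p" if p: "p \<in> {1..56}" for p
  proof (cases "p \<le> 45")
    case True then show ?thesis using A p by simp
  next
    case False
    define q where "q = (if p = 46 then 47 else (46::nat))"
    define r where "r = (if p = 56 then 55 else (56::nat))"
    have "3 dvd (u p + u q)" "3 dvd (u p + u r)" "3 dvd (u q + u r)"
      using D False p unfolding q_def r_def by auto
    then show ?thesis by presburger
  qed
  show ?thesis
  proof (unfold gf3_dual_def, safe)
    fix v assume "v \<in> gf3_span 56 {1..56} (inc Bl)"
    then obtain a :: "nat \<Rightarrow> int" where
      a: "\<And>j. v j = (if j \<in> {1..56} then (\<Sum>i\<in>{1..56}. a i * inc Bl i j) mod 3 else 0)"
      unfolding gf3_span_def by blast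
    define S where "S = (\<lambda>j. \<Sum>i\<in>{1..56}. a i * inc Bl i j)"
    have ins: "{1..56::nat} = insert 56 {1..55}" by auto
    have "(\<Sum>j=1..56. (if j = 56 then 0 else c j) * v j) = (\<Sum>j=1..55. c j * (S j mod 3))"
      by (subst ins, subst sum.insert) (auto intro!: sum.cong simp: a S_def)
    also have "\<dots> mod 3 = (\<Sum>j=1..55. c j * S j) mod 3"
      by (subst mod_sum_eq[symmetric]) (simp add: mod_mult_right_eq mod_sum_eq)
    also have "(\<Sum>j=1..55. c j * S j) = (\<Sum>i\<in>{1..56}. a i * u i)"
      unfolding S_def u_def by (simp add: sum_distrib_left sum_distrib_right mult_ac, rule sum.swap)
    also have "\<dots> mod 3 = 0" unfolding mod_eq_0_iff_dvd by (rule dvd_sum, rule dvd_mult, rule E) simp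
    finally show "(\<Sum>j=1..56. (if j = 56 then 0 else c j) * v j) mod 3 = 0" .
  qed
qed

end
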